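(* Let $\kappa=(a,b,c,d)\in[-2,2]^4$, $\rho\in\mathcal H_\kappa$, and $(x,y,z)=(\operatorname{tr}\rho(AB),\operatorname{tr}\rho(BC),\operatorname{tr}\rho(CA))$. If $\rho$ is a $\mathrm{Pin}(2)$-representation but not a $\mathrm{Spin}(2)$-representation, then one of the following holds: (1) $\kappa=(0,0,0,0)$; (2) one of the following six conditions holds: $a=b=0$ and $y=z=0$; $c=d=0$ and $y=z=0$; $a=c=0$ and $x=y=0$; $b=d=0$ and $x=y=0$; $a=d=0$ and $x=z=0$; $b=c=0$ and $x=z=0$. Conversely, if $\rho\in\mathcal H_\kappa$ satisfies (1) or (2), then $\rho$ is a $\mathrm{Pin}(2)$-representation.
   Context: $M$ is a four-holed sphere with $\pi_1(M)=\langle A,B,C,D : ABCD=I\rangle$, $A,B,C,D$ the boundary classes. For $\kappa=(a,b,c,d)\in[-2,2]^4$, $\mathcal H_\kappa$ is the set of homomorphisms $\rho:\pi_1(M)\to\mathrm{SU}(2)$ with $\operatorname{tr}\rho(A)=a$, $\operatorname{tr}\rho(B)=b$, $\operatorname{tr}\rho(C)=c$, $\operatorname{tr}\rho(D)=d$. Let $p:\mathrm{SU}(2)\to\mathrm{SO}(3)$ be the double cover; $\mathrm{Pin}(2)=p^{-1}(\mathrm{O}(2))$, which has two components $\mathrm{Spin}(2)\cup\mathrm{Spin}_-(2)$, where $\mathrm{Spin}(2)$ is the identity component, the circle $\{e^{i\theta}\}$ with $e^{i\theta}=\begin{pmatrix}\cos\theta&\sin\theta\\-\sin\theta&\cos\theta\end{pmatrix}$,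 and $\mathrm{Spin}_-(2)$ is the other component (e.g. containing $\iota=\begin{pmatrix}i&0\\0&-i\end{pmatrix}$); all elements of $\mathrm{Spin}_-(2)$ have trace $0$. For a subgroup $G\subset\mathrm{SU}(2)$, $\rho$ is called a $G$-representation if some $\mathrm{SU}(2)$-conjugate of $\rho$ has image contained in $G$. *)

theory Defs
  imports "HOL-Analysis.Analysis"
begin

type_synonym cmat2 = "complex^2^2"

definition mat2 :: "complex \<Rightarrow> complex \<Rightarrow> complex \<Rightarrow> complex \<Rightarrow> cmat2" where
  "mat2 p q r s = (\<chi> i j. if i = 1 then (if j = 1 then p else q) else (if j = 1 then r else s))"

definition ctrans :: "cmat2 \<Rightarrow> cmat2" where
  "ctrans M = (\<chi> i j. cnj (M $ j $ i))"

definition SU2 :: "cmat2 set" where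
  "SU2 = {M. M ** ctrans M = mat 1 \<and> det M = 1}"

definition eith :: "real \<Rightarrow> cmat2" where
  "eith \<theta> = mat2 (cos \<theta>) (sin \<theta>) (- sin \<theta>) (cos \<theta>)"

definition iota :: cmat2 where
  "iota = mat2 \<i> 0 0 (- \<i>)"

definition Spin2 :: "cmat2 set" where
  "Spin2 = range eith"

definition Spin2_minus :: "cmat2 set" where
  "Spin2_minus = (\<lambda>\<theta>. iota ** eith \<theta>) ` UNIV"

definition Pin2 :: "cmat2 set" where
  "Pin2 = Spin2 \<union> Spin2_minus"

text \<open>Image of the representation of pi_1(M) = <A,B,C,D | ABCD = I> determined by the
  images of the generators: the subgroup of SU(2) generated by them.\<close>
inductive_set rep_image :: "cmat2 \<Rightarrow> cmat2 \<Rightarrow> cmat2 \<Rightarrow> cmat2 \<Rightarrow> cmat2 set"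
  for A B C D where
  one: "mat 1 \<in> rep_image A B C D"
| mul: "g \<in> rep_image A B C D \<Longrightarrow> X \<in> {A, B, C, D} \<Longrightarrow> g ** X \<in> rep_image A B C D"
| mulinv: "g \<in> rep_image A B C D \<Longrightarrow> X \<in> {A, B, C, D} \<Longrightarrow> g ** ctrans X \<in> rep_image A B C D"

definition is_G_rep :: "cmat2 set \<Rightarrow> cmat2 \<Rightarrow> cmat2 \<Rightarrow> cmat2 \<Rightarrow> cmat2 \<Rightarrow> bool" where
  "is_G_rep G A B C D \<longleftrightarrow>
     (\<exists>g \<in> SU2. \<forall>h \<in> rep_image A B C D. g ** h ** ctrans g \<in> G)"

text \<open>Homomorphisms pi_1(M) -> SU(2) with boundary traces kappa = (a,b,c,d),
  given by the images (A,B,C,D) of the generators.\<close>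
definition H_kappa :: "real \<Rightarrow> real \<Rightarrow> real \<Rightarrow> real \<Rightarrow> (cmat2 \<times> cmat2 \<times> cmat2 \<times> cmat2) set" where
  "H_kappa a b c d = {(A, B, C, D). A \<in> SU2 \<and> B \<in> SU2 \<and> C \<in> SU2 \<and> D \<in> SU2 \<and>
      A ** B ** C ** D = mat 1 \<and>
      trace A = complex_of_real a \<and> trace B = complex_of_real b \<and>
      trace C = complex_of_real c \<and> trace D = complex_of_real d}"

end

theory Submission
  imports Defs
begin


lemma mat2_nth: "mat2 p q r s $ 1 $ 1 = p" "mat2 p q r s $ 1 $ 2 = q"
  "mat2 p q r s $ 2 $ 1 = r" "mat2 p q r s $ 2 $ 2 = s"
  by (simp_all add: mat2_def)

lemma mat2_all: "M = mat2 (M$1$1) (M$1$2) (M$2$1) (M$2$2)"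
  unfolding mat2_def by (simp add: vec_eq_iff forall_2)

lemma mat2_eq: "mat2 p q r s = mat2 p2 q2 r2 s2 \<longleftrightarrow> p = p2 \<and> q = q2 \<and> r = r2 \<and> s = s2"
  by (metis mat2_nth)

lemma mat2_mult: "mat2 p q r s ** mat2 p2 q2 r2 s2 =
   mat2 (p*p2+q*r2) (p*q2+q* s2) (r*p2+s*r2) (r*q2+s* s2)"
  unfolding mat2_def matrix_matrix_mult_def by (simp add: vec_eq_iff forall_2 sum_2)

lemma mat2_one: "mat 1 = mat2 1 0 0 1"
  unfolding mat2_def mat_def by (simp add: vec_eq_iff forall_2)

lemma ctrans_mat2: "ctrans (mat2 p q r s) = mat2 (cnj p) (cnj r) (cnj q) (cnj s)"
  unfolding mat2_def ctrans_def by (simp add: vec_eq_iff forall_2)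

lemma det_mat2: "det (mat2 p q r s) = p* s - q*r"
  by (simp add: det_2 mat2_nth)

lemma trace_mat2: "trace (mat2 p q r s) = p + s"
  by (simp add: trace_def sum_2 mat2_nth)

definition Q :: "real \<Rightarrow> real \<Rightarrow> real \<Rightarrow> real \<Rightarrow> cmat2" where
  "Q w s t r = mat2 (Complex w s) (Complex t r) (Complex (-t) r) (Complex w (-s))"

lemma Q_mult: "Q w s t r ** Q w2 s2 t2 r2 =
  Q (w*w2 - s* s2 - t*t2 - r*r2) (w* s2 + s*w2 + t*r2 - r*t2)
    (w*t2 - s*r2 + t*w2 + r* s2) (w*r2 + s*t2 - t* s2 + r*w2)"
  unfolding Q_def mat2_mult mat2_eq by (simp add: complex_eq_iff algebra_simps)

lemma ctrans_Q: "ctrans (Q w s t r) = Q w (-s) (-t) (-r)"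
  unfolding Q_def ctrans_mat2 mat2_eq by (simp add: complex_eq_iff)

lemma trace_Q: "trace (Q w s t r) = complex_of_real (2*w)"
  unfolding Q_def trace_mat2 by (simp add: complex_eq_iff)

lemma Q_one: "mat 1 = Q 1 0 0 0"
  unfolding Q_def mat2_one mat2_eq by (simp add: complex_eq_iff)

lemma Q_eq: "Q w s t r = Q w2 s2 t2 r2 \<longleftrightarrow> w = w2 \<and> s = s2 \<and> t = t2 \<and> r = r2"
  unfolding Q_def mat2_eq by (auto simp: complex_eq_iff)

lemma SU2_Q: "M \<in> SU2 \<longleftrightarrow> (\<exists>w s t r. M = Q w s t r \<and> w^2+s^2+t^2+r^2 = 1)"
proof
  assume "M \<in> SU2"
  then have u: "M ** ctrans M = mat 1" and d: "det M = 1" by (auto simp: SU2_def)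
  obtain p q r s where M: "M = mat2 p q r s" using mat2_all by blast
  from u have e: "p*cnj p + q*cnj q = 1" "p * cnj r + q * cnj s = 0" "r * cnj p + s * cnj q = 0"
     "r * cnj r + s * cnj s = 1"
    unfolding M ctrans_mat2 mat2_mult mat2_one mat2_eq by auto
  from d have d': "p* s - q*r = 1" unfolding M det_mat2 .
  have "s = s * (p*cnj p + q*cnj q)" using e by simp
  also have "\<dots> = cnj p * (p* s) + q * (cnj q * s)" by (simp add: algebra_simps)
  also have "\<dots> = cnj p * (1 + q * r) + q * (cnj q * s)" using d' by (simp add: algebra_simps)
  also have "\<dots> = cnj p + q * (r * cnj p + s * cnj q)" by (simp add: algebra_simps)
  finally have s: "s = cnj p" using e by simp
  have "r = r * (p*cnj p + q*cnj q)" using e by simp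
  also have "\<dots> = p * (r * cnj p) + cnj q * (q * r)" by (simp add: algebra_simps)
  also have "\<dots> = p * (- (s * cnj q)) + cnj q * (p * s - 1)"
  proof -
    have h1: "r * cnj p = - (s * cnj q)" using e(3) by (simp add: eq_neg_iff_add_eq_0)
    have h2: "q * r = p * s - 1" using d' by (simp add: algebra_simps)
    show ?thesis unfolding h1 h2 ..
  qed
  finally have r: "r = - cnj q" by (simp add: algebra_simps)
  have "M = Q (Re p) (Im p) (Re q) (Im q)" unfolding M Q_def mat2_eq s r
    by (simp add: complex_eq_iff)
  moreover have "(Re p)^2 + (Im p)^2 + (Re q)^2 + (Im q)^2 = 1" using e(1)
    by (simp add: complex_eq_iff power2_eq_square)
  ultimately show "\<exists>w s t r. M = Q w s t r \<and> w^2+s^2+t^2+r^2 = 1" by blast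
next
  assume "\<exists>w s t r. M = Q w s t r \<and> w^2+s^2+t^2+r^2 = 1"
  then obtain w s t r where M: "M = Q w s t r" and n: "w^2+s^2+t^2+r^2 = 1" by blast
  have "Q w s t r ** ctrans (Q w s t r) = Q (w^2+s^2+t^2+r^2) 0 0 0"
    unfolding ctrans_Q Q_mult Q_eq by (simp add: power2_eq_square algebra_simps)
  moreover have "det (Q w s t r) = complex_of_real (w^2+s^2+t^2+r^2)"
    unfolding Q_def det_mat2 by (simp add: complex_eq_iff power2_eq_square algebra_simps)
  ultimately show "M \<in> SU2" unfolding SU2_def M using n by (simp add: Q_one)
qed



declare Q_eq[simp]

definition SP :: "cmat2 set" where "SP = {Q w 0 t 0 | w t. True}"
definition SM :: "cmat2 set" where "SM = {Q 0 s 0 r | s r. True}"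

lemma eith_Q: "eith th = Q (cos th) 0 (sin th) 0"
  unfolding eith_def Q_def mat2_eq by (simp add: complex_eq_iff)

lemma iota_eith_Q: "iota ** eith th = Q 0 (cos th) 0 (sin th)"
proof -
  have i: "iota = Q 0 1 0 0" unfolding iota_def Q_def mat2_eq by (simp add: complex_eq_iff)
  show ?thesis unfolding i eith_Q Q_mult by simp
qed

lemma Spin2_Q: "Spin2 = SU2 \<inter> SP"
proof (intro set_eqI iffI)
  fix M assume "M \<in> Spin2"
  then obtain th where "M = Q (cos th) 0 (sin th) 0" unfolding Spin2_def by (auto simp: eith_Q)
  then show "M \<in> SU2 \<inter> SP" by (auto simp: SP_def SU2_Q)
next
  fix M assume "M \<in> SU2 \<inter> SP"
  then obtain w t where M: "M = Q w 0 t 0" and n: "w^2 + t^2 = 1"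
    by (auto simp: SP_def SU2_Q)
  obtain th where "w = cos th" "t = sin th" using sincos_total_2pi[OF n] by blast
  then show "M \<in> Spin2" unfolding Spin2_def M eith_Q by auto
qed

lemma Spin2m_Q: "Spin2_minus = SU2 \<inter> SM"
proof (intro set_eqI iffI)
  fix M assume "M \<in> Spin2_minus"
  then obtain th where "M = Q 0 (cos th) 0 (sin th)" unfolding Spin2_minus_def by (auto simp: iota_eith_Q)
  then show "M \<in> SU2 \<inter> SM" by (auto simp: SM_def SU2_Q)
next
  fix M assume "M \<in> SU2 \<inter> SM"
  then obtain s r where M: "M = Q 0 s 0 r" and n: "s^2 + r^2 = 1"
    by (auto simp: SM_def SU2_Q)
  obtain th where "s = cos th" "r = sin th" using sincos_total_2pi[OF n] by blast
  then show "M \<in> Spin2_minus" unfolding Spin2_minus_def M iota_eith_Q by auto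
qed

lemma Pin2_Q: "Pin2 = SU2 \<inter> (SP \<union> SM)"
  unfolding Pin2_def Spin2_Q Spin2m_Q by blast

lemma SP_SP: "X \<in> SP \<Longrightarrow> Y \<in> SP \<Longrightarrow> X ** Y \<in> SP"
  unfolding SP_def by (auto simp: Q_mult Q_eq)
lemma SP_SM: "X \<in> SP \<Longrightarrow> Y \<in> SM \<Longrightarrow> X ** Y \<in> SM"
  unfolding SP_def SM_def by (auto simp: Q_mult Q_eq)
lemma SM_SP: "X \<in> SM \<Longrightarrow> Y \<in> SP \<Longrightarrow> X ** Y \<in> SM"
  unfolding SP_def SM_def by (auto simp: Q_mult Q_eq)
lemma SM_SM: "X \<in> SM \<Longrightarrow> Y \<in> SM \<Longrightarrow> X ** Y \<in> SP"
  unfolding SP_def SM_def by (auto simp: Q_mult Q_eq)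
lemma SP_ctrans: "X \<in> SP \<Longrightarrow> ctrans X \<in> SP"
  unfolding SP_def by (auto simp: ctrans_Q)
lemma SM_ctrans: "X \<in> SM \<Longrightarrow> ctrans X \<in> SM"
  unfolding SM_def by (auto simp: ctrans_Q)
lemma one_SP: "mat 1 \<in> SP" unfolding SP_def Q_one by auto
lemma one_not_SM: "mat 1 \<notin> SM" unfolding SM_def Q_one by (auto simp: Q_eq)
lemma trace_SM: "X \<in> SM \<Longrightarrow> trace X = 0" unfolding SM_def by (auto simp: trace_Q)

lemma SU2_mult: "X \<in> SU2 \<Longrightarrow> Y \<in> SU2 \<Longrightarrow> X ** Y \<in> SU2"
proof -
  assume "X \<in> SU2" "Y \<in> SU2"
  then obtain w s t r w2 s2 t2 r2 where X: "X = Q w s t r" "w^2+s^2+t^2+r^2 = 1"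
    and Y: "Y = Q w2 s2 t2 r2" "w2^2+s2^2+t2^2+r2^2 = 1" unfolding SU2_Q by blast
  have "(w*w2 - s* s2 - t*t2 - r*r2)^2 + (w* s2 + s*w2 + t*r2 - r*t2)^2 +
    (w*t2 - s*r2 + t*w2 + r* s2)^2 + (w*r2 + s*t2 - t* s2 + r*w2)^2
    = (w^2+s^2+t^2+r^2) * (w2^2+s2^2+t2^2+r2^2)" by algebra
  then show ?thesis unfolding SU2_Q X(1) Y(1) Q_mult using X(2) Y(2) by auto
qed

lemma SU2_ctrans: "X \<in> SU2 \<Longrightarrow> ctrans X \<in> SU2"
  unfolding SU2_Q by (auto simp: ctrans_Q)

lemma one_SU2: "mat 1 \<in> SU2" unfolding SU2_Q Q_one by auto

lemma SU2_inv: "X \<in> SU2 \<Longrightarrow> X ** ctrans X = mat 1 \<and> ctrans X ** X = mat 1"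
  unfolding SU2_Q by (auto simp: ctrans_Q Q_mult Q_one Q_eq power2_eq_square algebra_simps)

lemma ctrans_mult: fixes X Y :: cmat2 shows "ctrans (X ** Y) = ctrans Y ** ctrans X"
  by (subst (1 2) mat2_all[of X], subst (1 2) mat2_all[of Y])
     (simp add: mat2_mult ctrans_mat2 mat2_eq algebra_simps)

lemma ctrans_ctrans: fixes X Y :: cmat2 shows "ctrans (ctrans X) = X"
  by (subst (1 2) mat2_all[of X]) (simp add: ctrans_mat2)

lemma trace_comm: fixes X Y :: cmat2 shows "trace (X ** Y) = trace (Y ** X)"
  by (subst (1 2) mat2_all[of X], subst (1 2) mat2_all[of Y])
     (simp add: mat2_mult trace_mat2 algebra_simps)

lemma trace_conj: fixes X :: cmat2 shows "g \<in> SU2 \<Longrightarrow> trace (g ** X ** ctrans g) = trace X"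
  by (metis trace_comm matrix_mul_assoc SU2_inv matrix_mul_lid)



lemma gens_in: "A \<in> rep_image A B C D" "B \<in> rep_image A B C D"
  "C \<in> rep_image A B C D" "D \<in> rep_image A B C D"
  using rep_image.mul[OF rep_image.one, of _ A B C D] by auto

lemma conj_mult:
  assumes "g \<in> SU2"
  shows "g ** (h ** X) ** ctrans g = (g ** h ** ctrans g) ** (g ** X ** ctrans g)"
proof -
  have "(g ** h ** ctrans g) ** (g ** X ** ctrans g) = g ** h ** (ctrans g ** g) ** X ** ctrans g"
    by (simp add: matrix_mul_assoc)
  also have "\<dots> = g ** (h ** X) ** ctrans g" using SU2_inv[OF assms] by (simp add: matrix_mul_assoc)
  finally show ?thesis by simp
qed

lemma conj_ctrans: "ctrans (g ** X ** ctrans g) = g ** ctrans X ** ctrans g"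
  by (simp add: ctrans_mult ctrans_ctrans matrix_mul_assoc)

lemma conj_closed:
  assumes g: "g \<in> SU2"
    and mulG: "\<And>X Y. X \<in> G \<Longrightarrow> Y \<in> G \<Longrightarrow> X ** Y \<in> G"
    and invG: "\<And>X. X \<in> G \<Longrightarrow> ctrans X \<in> G"
    and oneG: "mat 1 \<in> G"
    and gens: "\<And>X. X \<in> {A, B, C, D} \<Longrightarrow> g ** X ** ctrans g \<in> G"
    and h: "h \<in> rep_image A B C D"
  shows "g ** h ** ctrans g \<in> G"
  using h
proof induction
  case one
  then show ?case using SU2_inv[OF g] oneG by simp
next
  case (mul h X)
  then show ?case unfolding conj_mult[OF g] using mulG gens by blast
next
  case (mulinv h X)
  then show ?case unfolding conj_mult[OF g] using mulG gens invG conj_ctrans by metis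
qed

lemma Spin2_closed: "X \<in> Spin2 \<Longrightarrow> Y \<in> Spin2 \<Longrightarrow> X ** Y \<in> Spin2"
  "X \<in> Spin2 \<Longrightarrow> ctrans X \<in> Spin2" "mat 1 \<in> Spin2"
  unfolding Spin2_Q using SU2_mult SP_SP SU2_ctrans SP_ctrans one_SU2 one_SP by auto

lemma Pin2_closed: "X \<in> Pin2 \<Longrightarrow> Y \<in> Pin2 \<Longrightarrow> X ** Y \<in> Pin2"
  "X \<in> Pin2 \<Longrightarrow> ctrans X \<in> Pin2" "mat 1 \<in> Pin2"
  unfolding Pin2_Q using SU2_mult SP_SP SP_SM SM_SP SM_SM SU2_ctrans SP_ctrans SM_ctrans one_SU2 one_SP
  by auto

lemma fwd_core:
  assumes P: "X \<in> Pin2" "Y \<in> Pin2" "Z \<in> Pin2" "W \<in> Pin2"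
    and prod: "X ** Y ** Z ** W = mat 1"
    and nsp: "\<not> (X \<in> Spin2 \<and> Y \<in> Spin2 \<and> Z \<in> Spin2 \<and> W \<in> Spin2)"
  shows "(X \<in> SM \<and> Y \<in> SM \<and> Z \<in> SM \<and> W \<in> SM) \<or>
         (X \<in> SM \<and> Y \<in> SM \<and> Z \<in> SP \<and> W \<in> SP) \<or>
         (X \<in> SM \<and> Y \<in> SP \<and> Z \<in> SM \<and> W \<in> SP) \<or>
         (X \<in> SM \<and> Y \<in> SP \<and> Z \<in> SP \<and> W \<in> SM) \<or>
         (X \<in> SP \<and> Y \<in> SM \<and> Z \<in> SM \<and> W \<in> SP) \<or>
         (X \<in> SP \<and> Y \<in> SM \<and> Z \<in> SP \<and> W \<in> SM) \<or>
         (X \<in> SP \<and> Y \<in> SP \<and> Z \<in> SM \<and> W \<in> SM)"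
proof -
  have c: "V \<in> SP \<or> V \<in> SM" if "V \<in> Pin2" for V using that unfolding Pin2_Q by auto
  have s: "V \<in> Spin2" if "V \<in> Pin2" "V \<in> SP" for V using that unfolding Pin2_Q Spin2_Q by auto
  have "X ** Y ** Z ** W \<notin> SM" using prod one_not_SM by simp
  then show ?thesis
    using c[OF P(1)] c[OF P(2)] c[OF P(3)] c[OF P(4)] s[OF P(1)] s[OF P(2)] s[OF P(3)] s[OF P(4)] nsp
    apply -
    apply (elim disjE)
    apply (blast intro: SP_SP SP_SM SM_SP SM_SM)+
    done
qed



lemma rot_par:
  assumes "L^2 = n1^2+n2^2+n3^2"
  shows "Q (k*(L+n2)) (-(k*n3)) 0 (k*n1) ** Q w (m*n1) (m*n2) (m*n3) ** ctrans (Q (k*(L+n2)) (-(k*n3)) 0 (k*n1)) \<in> SP"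
  unfolding SP_def ctrans_Q Q_mult using assms by simp algebra

lemma rot_perp:
  assumes "L^2 = n1^2+n2^2+n3^2" "s*n1 + t*n2 + r*n3 = 0"
  shows "Q (k*(L+n2)) (-(k*n3)) 0 (k*n1) ** Q 0 s t r ** ctrans (Q (k*(L+n2)) (-(k*n3)) 0 (k*n1)) \<in> SM"
  unfolding SM_def ctrans_Q Q_mult using assms by simp algebra



lemma conj_one: "mat 1 ** X ** ctrans (mat 1) = X"
proof -
  have "ctrans (mat 1) = (mat 1 :: cmat2)" by (simp add: Q_one ctrans_Q)
  then show ?thesis by simp
qed

lemma rot:
  assumes nz: "n1 \<noteq> 0 \<or> n2 \<noteq> 0 \<or> n3 \<noteq> 0"
  shows "\<exists>g\<in>SU2. \<forall>w s t r. ((\<exists>m. s = m*n1 \<and> t = m*n2 \<and> r = m*n3) \<longrightarrow> g ** Q w s t r ** ctrans g \<in> SP)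
     \<and> ((w = 0 \<and> s*n1 + t*n2 + r*n3 = 0) \<longrightarrow> g ** Q w s t r ** ctrans g \<in> SM)"
proof (cases "n1 = 0 \<and> n3 = 0")
  case True
  then have n2: "n2 \<noteq> 0" using nz by auto
  show ?thesis
  proof (intro bexI[of _ "mat 1"] allI conjI impI)
    fix w s t r :: real
    assume "\<exists>m. s = m*n1 \<and> t = m*n2 \<and> r = m*n3"
    then show "mat 1 ** Q w s t r ** ctrans (mat 1) \<in> SP" using True unfolding conj_one SP_def by auto
  next
    fix w s t r :: real
    assume "w = 0 \<and> s*n1 + t*n2 + r*n3 = 0"
    then show "mat 1 ** Q w s t r ** ctrans (mat 1) \<in> SM" using True n2 unfolding conj_one SM_def by auto
  qed (rule one_SU2)
next
  case False
  define L where "L = sqrt (n1^2+n2^2+n3^2)"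
  have L2: "L^2 = n1^2+n2^2+n3^2" unfolding L_def by simp
  have L0: "L \<ge> 0" unfolding L_def by simp
  have "n1^2 + n3^2 > 0" using False by (auto simp: add_pos_nonneg add_nonneg_pos)
  then have "L^2 > n2^2" using L2 by simp
  then have "L > \<bar>n2\<bar>" using L0 by (metis abs_of_nonneg power2_abs power_less_imp_less_base)
  then have Lp: "L + n2 > 0" by linarith
  define N where "N = (L+n2)^2 + n3^2 + n1^2"
  have Np: "N > 0" unfolding N_def using Lp by (simp add: add_pos_nonneg)
  define k where "k = 1 / sqrt N"
  have k2: "k^2 * N = 1" unfolding k_def using Np by (simp add: power_divide)
  define g where "g = Q (k*(L+n2)) (-(k*n3)) 0 (k*n1)"
  have e: "(k*(L+n2))^2 + (-(k*n3))^2 + 0^2 + (k*n1)^2 = k^2 * N" unfolding N_def by (simp only: power_mult_distrib power2_minus) (simp add: distrib_left)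
  have gSU: "g \<in> SU2" unfolding g_def SU2_Q
    using k2 e by auto
  show ?thesis
  proof (intro bexI[OF _ gSU] allI conjI impI)
    fix w s t r :: real
    assume "\<exists>m. s = m*n1 \<and> t = m*n2 \<and> r = m*n3"
    then obtain m where "s = m*n1" "t = m*n2" "r = m*n3" by blast
    then show "g ** Q w s t r ** ctrans g \<in> SP" unfolding g_def using rot_par[OF L2] by simp
  next
    fix w s t r :: real
    assume "w = 0 \<and> s*n1 + t*n2 + r*n3 = 0"
    then show "g ** Q w s t r ** ctrans g \<in> SM" unfolding g_def using rot_perp[OF L2] by simp
  qed
qed



lemma par_perp:
  fixes x1 x2 x3 y1 y2 y3 n1 n2 n3 :: real
  assumes cr: "x2*y3 - x3*y2 = 0" "x3*y1 - x1*y3 = 0" "x1*y2 - x2*y1 = 0"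
    and xn: "x1*n1 + x2*n2 + x3*n3 = 0" and nz: "x1 \<noteq> 0 \<or> x2 \<noteq> 0 \<or> x3 \<noteq> 0"
  shows "y1*n1 + y2*n2 + y3*n3 = 0"
proof -
  have "x1 * (y1*n1 + y2*n2 + y3*n3) = 0" "x2 * (y1*n1 + y2*n2 + y3*n3) = 0"
    "x3 * (y1*n1 + y2*n2 + y3*n3) = 0" using cr xn by algebra+
  then show ?thesis using nz by auto
qed

lemma perp_exists:
  fixes x1 x2 x3 :: real
  assumes nz: "x1 \<noteq> 0 \<or> x2 \<noteq> 0 \<or> x3 \<noteq> 0"
  shows "\<exists>n1 n2 n3. (n1 \<noteq> 0 \<or> n2 \<noteq> 0 \<or> n3 \<noteq> 0) \<and> x1*n1 + x2*n2 + x3*n3 = 0"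
proof (cases "x1 = 0 \<and> x2 = 0")
  case True
  then show ?thesis by (intro exI[of _ 1] exI[of _ 0]) auto
next
  case False
  then show ?thesis by (intro exI[of _ x2] exI[of _ "-x1"] exI[of _ 0]) auto
qed

lemma N3:
  fixes x1 x2 x3 y1 y2 y3 z1 z2 z3 :: real
  assumes nz: "x1 \<noteq> 0 \<or> x2 \<noteq> 0 \<or> x3 \<noteq> 0"
    and det: "x1*(y2*z3-y3*z2) + x2*(y3*z1-y1*z3) + x3*(y1*z2-y2*z1) = 0"
  shows "\<exists>n1 n2 n3. (n1 \<noteq> 0 \<or> n2 \<noteq> 0 \<or> n3 \<noteq> 0) \<and> x1*n1 + x2*n2 + x3*n3 = 0
     \<and> y1*n1 + y2*n2 + y3*n3 = 0 \<and> z1*n1 + z2*n2 + z3*n3 = 0"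
proof (cases "x2*y3 - x3*y2 = 0 \<and> x3*y1 - x1*y3 = 0 \<and> x1*y2 - x2*y1 = 0")
  case False
  show ?thesis
    apply (rule exI[of _ "x2*y3 - x3*y2"], rule exI[of _ "x3*y1 - x1*y3"], rule exI[of _ "x1*y2 - x2*y1"])
  proof (intro conjI)
    show "x2*y3 - x3*y2 \<noteq> 0 \<or> x3*y1 - x1*y3 \<noteq> 0 \<or> x1*y2 - x2*y1 \<noteq> 0" using False by blast
    show "x1*(x2*y3 - x3*y2) + x2*(x3*y1 - x1*y3) + x3*(x1*y2 - x2*y1) = 0" by algebra
    show "y1*(x2*y3 - x3*y2) + y2*(x3*y1 - x1*y3) + y3*(x1*y2 - x2*y1) = 0" by algebra
    show "z1*(x2*y3 - x3*y2) + z2*(x3*y1 - x1*y3) + z3*(x1*y2 - x2*y1) = 0" using det by algebra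
  qed
next
  case xy: True
  show ?thesis
  proof (cases "x2*z3 - x3*z2 = 0 \<and> x3*z1 - x1*z3 = 0 \<and> x1*z2 - x2*z1 = 0")
    case False
    have "\<exists>n1 n2 n3. (n1 \<noteq> 0 \<or> n2 \<noteq> 0 \<or> n3 \<noteq> 0) \<and> x1*n1 + x2*n2 + x3*n3 = 0
       \<and> z1*n1 + z2*n2 + z3*n3 = 0"
      apply (rule exI[of _ "x2*z3 - x3*z2"], rule exI[of _ "x3*z1 - x1*z3"], rule exI[of _ "x1*z2 - x2*z1"])
    proof (intro conjI)
      show "x2*z3 - x3*z2 \<noteq> 0 \<or> x3*z1 - x1*z3 \<noteq> 0 \<or> x1*z2 - x2*z1 \<noteq> 0" using False by blast
      show "x1*(x2*z3 - x3*z2) + x2*(x3*z1 - x1*z3) + x3*(x1*z2 - x2*z1) = 0" by algebra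
      show "z1*(x2*z3 - x3*z2) + z2*(x3*z1 - x1*z3) + z3*(x1*z2 - x2*z1) = 0" by algebra
    qed
    then obtain n1 n2 n3 where n: "(n1 \<noteq> 0 \<or> n2 \<noteq> 0 \<or> n3 \<noteq> 0)" "x1*n1 + x2*n2 + x3*n3 = 0"
       "z1*n1 + z2*n2 + z3*n3 = 0" by blast
    have "y1*n1 + y2*n2 + y3*n3 = 0"
      by (rule par_perp[OF _ _ _ n(2) nz]) (use xy in auto)
    then show ?thesis using n by blast
  next
    case xz: True
    obtain n1 n2 n3 where "(n1 \<noteq> 0 \<or> n2 \<noteq> 0 \<or> n3 \<noteq> 0)" "x1*n1 + x2*n2 + x3*n3 = 0"
      using perp_exists[OF nz] by blast
    note n = this
    have "y1*n1 + y2*n2 + y3*n3 = 0"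
      by (rule par_perp[OF _ _ _ n(2) nz]) (use xy in auto)
    moreover have "z1*n1 + z2*n2 + z3*n3 = 0"
      by (rule par_perp[OF _ _ _ n(2) nz]) (use xz in auto)
    ultimately show ?thesis using n by blast
  qed
qed



lemma conj_triple:
  fixes x1 x2 x3 y1 y2 y3 z0 z1 z2 z3 :: real
  assumes xnz: "x1 \<noteq> 0 \<or> x2 \<noteq> 0 \<or> x3 \<noteq> 0"
    and cond: "(x1*z1+x2*z2+x3*z3 = 0 \<and> y1*z1+y2*z2+y3*z3 = 0) \<or>
      (z0 = 0 \<and> x1*(y2*z3-y3*z2) + x2*(y3*z1-y1*z3) + x3*(y1*z2-y2*z1) = 0)"
  shows "\<exists>g\<in>SU2. g ** Q 0 x1 x2 x3 ** ctrans g \<in> SP \<union> SM \<and> g ** Q 0 y1 y2 y3 ** ctrans g \<in> SP \<union> SM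
     \<and> g ** Q z0 z1 z2 z3 ** ctrans g \<in> SP \<union> SM"
proof -
  consider "x1*z1+x2*z2+x3*z3 = 0" "y1*z1+y2*z2+y3*z3 = 0" "z1 \<noteq> 0 \<or> z2 \<noteq> 0 \<or> z3 \<noteq> 0"
    | "z1 = 0" "z2 = 0" "z3 = 0"
    | "z0 = 0" "x1*(y2*z3-y3*z2) + x2*(y3*z1-y1*z3) + x3*(y1*z2-y2*z1) = 0"
    using cond by blast
  then show ?thesis
  proof cases
    case 1
    obtain g where g: "g \<in> SU2" and H: "\<forall>w s t r. ((\<exists>m. s = m*z1 \<and> t = m*z2 \<and> r = m*z3) \<longrightarrow> g ** Q w s t r ** ctrans g \<in> SP)
     \<and> ((w = 0 \<and> s*z1 + t*z2 + r*z3 = 0) \<longrightarrow> g ** Q w s t r ** ctrans g \<in> SM)"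
      using rot[OF 1(3)] by blast
    have "g ** Q 0 x1 x2 x3 ** ctrans g \<in> SM" using H 1 by blast
    moreover have "g ** Q 0 y1 y2 y3 ** ctrans g \<in> SM" using H 1 by blast
    moreover have "g ** Q z0 z1 z2 z3 ** ctrans g \<in> SP" using H[rule_format, of z1 z2 z3 z0] by auto
    ultimately show ?thesis using g by blast
  next
    case 2
    obtain n1 n2 n3 where n: "n1 \<noteq> 0 \<or> n2 \<noteq> 0 \<or> n3 \<noteq> 0" "x1*n1 + x2*n2 + x3*n3 = 0"
     "y1*n1 + y2*n2 + y3*n3 = 0"
    proof -
      have "\<exists>n1 n2 n3. (n1 \<noteq> 0 \<or> n2 \<noteq> 0 \<or> n3 \<noteq> 0) \<and> x1*n1 + x2*n2 + x3*n3 = 0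
        \<and> y1*n1 + y2*n2 + y3*n3 = 0 \<and> 0*n1 + 0*n2 + 0*n3 = 0"
        by (rule N3[OF xnz]) simp
      then show ?thesis using that by auto
    qed
    obtain g where g: "g \<in> SU2" and H: "\<forall>w s t r. ((\<exists>m. s = m*n1 \<and> t = m*n2 \<and> r = m*n3) \<longrightarrow> g ** Q w s t r ** ctrans g \<in> SP)
     \<and> ((w = 0 \<and> s*n1 + t*n2 + r*n3 = 0) \<longrightarrow> g ** Q w s t r ** ctrans g \<in> SM)"
      using rot[OF n(1)] by blast
    have "g ** Q 0 x1 x2 x3 ** ctrans g \<in> SM" using H n by blast
    moreover have "g ** Q 0 y1 y2 y3 ** ctrans g \<in> SM" using H n by blast
    moreover have "g ** Q z0 z1 z2 z3 ** ctrans g \<in> SP" using H[rule_format, of z1 z2 z3 z0] 2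
      by (metis mult_zero_left)
    ultimately show ?thesis using g by blast
  next
    case 3
    obtain n1 n2 n3 where n: "n1 \<noteq> 0 \<or> n2 \<noteq> 0 \<or> n3 \<noteq> 0" "x1*n1 + x2*n2 + x3*n3 = 0"
     "y1*n1 + y2*n2 + y3*n3 = 0" "z1*n1 + z2*n2 + z3*n3 = 0"
      using N3[OF xnz 3(2)] by auto
    obtain g where g: "g \<in> SU2" and H: "\<forall>w s t r. ((\<exists>m. s = m*n1 \<and> t = m*n2 \<and> r = m*n3) \<longrightarrow> g ** Q w s t r ** ctrans g \<in> SP)
     \<and> ((w = 0 \<and> s*n1 + t*n2 + r*n3 = 0) \<longrightarrow> g ** Q w s t r ** ctrans g \<in> SM)"
      using rot[OF n(1)] by blast
    have "g ** Q 0 x1 x2 x3 ** ctrans g \<in> SM" using H n by blast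
    moreover have "g ** Q 0 y1 y2 y3 ** ctrans g \<in> SM" using H n by blast
    moreover have "g ** Q z0 z1 z2 z3 ** ctrans g \<in> SM" using H n 3 by blast
    ultimately show ?thesis using g by blast
  qed
qed

lemma triple_pin:
  fixes x1 x2 x3 y1 y2 y3 z0 z1 z2 z3 :: real
  assumes X: "Q 0 x1 x2 x3 \<in> SU2" and Y: "Q 0 y1 y2 y3 \<in> SU2" and Z: "Q z0 z1 z2 z3 \<in> SU2"
    and cond: "(x1*z1+x2*z2+x3*z3 = 0 \<and> y1*z1+y2*z2+y3*z3 = 0) \<or>
      (z0 = 0 \<and> x1*(y2*z3-y3*z2) + x2*(y3*z1-y1*z3) + x3*(y1*z2-y2*z1) = 0)"
  shows "\<exists>g\<in>SU2. g ** Q 0 x1 x2 x3 ** ctrans g \<in> Pin2 \<and> g ** Q 0 y1 y2 y3 ** ctrans g \<in> Pin2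
     \<and> g ** Q z0 z1 z2 z3 ** ctrans g \<in> Pin2"
proof -
  have "x1 \<noteq> 0 \<or> x2 \<noteq> 0 \<or> x3 \<noteq> 0" using X unfolding SU2_Q by auto
  then obtain g where g: "g \<in> SU2" and H: "g ** Q 0 x1 x2 x3 ** ctrans g \<in> SP \<union> SM \<and> g ** Q 0 y1 y2 y3 ** ctrans g \<in> SP \<union> SM
     \<and> g ** Q z0 z1 z2 z3 ** ctrans g \<in> SP \<union> SM" using conj_triple[OF _ cond] by blast
  have su: "g ** V ** ctrans g \<in> SU2" if "V \<in> SU2" for V using SU2_mult SU2_ctrans g that by blast
  show ?thesis using H su[OF X] su[OF Y] su[OF Z] g unfolding Pin2_Q by blast
qed

lemma inv_eq: "N ** M = mat 1 \<Longrightarrow> N \<in> SU2 \<Longrightarrow> M = ctrans N"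
  by (metis SU2_inv matrix_mul_assoc matrix_mul_lid matrix_mul_rid)

lemma cyc: fixes X Y Z W :: cmat2
  shows "X ** Y ** Z ** W = mat 1 \<Longrightarrow> Y ** Z ** W ** X = mat 1"
  by (metis matrix_left_right_inverse matrix_mul_assoc)

lemma pin_from_three:
  assumes su: "A \<in> SU2" "B \<in> SU2" "C \<in> SU2" "D \<in> SU2"
    and prod: "A ** B ** C ** D = mat 1" and g: "g \<in> SU2"
    and H: "(g ** A ** ctrans g \<in> Pin2 \<and> g ** B ** ctrans g \<in> Pin2 \<and> g ** C ** ctrans g \<in> Pin2) \<or>
            (g ** B ** ctrans g \<in> Pin2 \<and> g ** C ** ctrans g \<in> Pin2 \<and> g ** D ** ctrans g \<in> Pin2) \<or>
            (g ** C ** ctrans g \<in> Pin2 \<and> g ** D ** ctrans g \<in> Pin2 \<and> g ** A ** ctrans g \<in> Pin2) \<or>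
            (g ** D ** ctrans g \<in> Pin2 \<and> g ** A ** ctrans g \<in> Pin2 \<and> g ** B ** ctrans g \<in> Pin2)"
  shows "is_G_rep Pin2 A B C D"
proof -
  define cA where "cA = g ** A ** ctrans g"
  define cB where "cB = g ** B ** ctrans g"
  define cC where "cC = g ** C ** ctrans g"
  define cD where "cD = g ** D ** ctrans g"
  have su': "cA \<in> SU2" "cB \<in> SU2" "cC \<in> SU2" "cD \<in> SU2"
    unfolding cA_def cB_def cC_def cD_def using su g SU2_mult SU2_ctrans by blast+
  have "cA ** cB ** cC ** cD = g ** (A ** B ** C ** D) ** ctrans g"
    unfolding cA_def cB_def cC_def cD_def conj_mult[OF g] ..
  also have "\<dots> = mat 1" using prod SU2_inv[OF g] by simp
  finally have p1: "cA ** cB ** cC ** cD = mat 1" .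
  have p2: "cB ** cC ** cD ** cA = mat 1" using cyc[OF p1] .
  have p3: "cC ** cD ** cA ** cB = mat 1" using cyc[OF p2] .
  have p4: "cD ** cA ** cB ** cC = mat 1" using cyc[OF p3] .
  have e: "cD = ctrans (cA ** cB ** cC)" "cA = ctrans (cB ** cC ** cD)"
    "cB = ctrans (cC ** cD ** cA)" "cC = ctrans (cD ** cA ** cB)"
    using inv_eq p1 p2 p3 p4 su' SU2_mult by (metis matrix_mul_assoc)+
  have all: "cA \<in> Pin2 \<and> cB \<in> Pin2 \<and> cC \<in> Pin2 \<and> cD \<in> Pin2"
    using H unfolding cA_def[symmetric] cB_def[symmetric] cC_def[symmetric] cD_def[symmetric]
    using e Pin2_closed by metis
  have "\<forall>h\<in>rep_image A B C D. g ** h ** ctrans g \<in> Pin2"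
  proof
    fix h assume "h \<in> rep_image A B C D"
    then show "g ** h ** ctrans g \<in> Pin2"
      using conj_closed[OF g, of Pin2 A B C D h] Pin2_closed all
      unfolding cA_def cB_def cC_def cD_def by blast
  qed
  then show ?thesis unfolding is_G_rep_def using g by blast
qed



lemma trace_ctrans_SU2: "M \<in> SU2 \<Longrightarrow> trace (ctrans M) = trace M"
  unfolding SU2_Q by (auto simp: ctrans_Q trace_Q)

lemma conj_prod:
  assumes g: "g \<in> SU2" and prod: "A ** B ** C ** D = mat 1"
  shows "(g ** A ** ctrans g) ** (g ** B ** ctrans g) ** (g ** C ** ctrans g) ** (g ** D ** ctrans g) = mat 1"
proof -
  have "(g ** A ** ctrans g) ** (g ** B ** ctrans g) ** (g ** C ** ctrans g) ** (g ** D ** ctrans g)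
     = g ** (A ** B ** C ** D) ** ctrans g"
    unfolding conj_mult[OF g] ..
  also have "\<dots> = mat 1" using prod SU2_inv[OF g] by simp
  finally show ?thesis .
qed

theorem proposition3p2:
  fixes a b c d :: real and A B C D :: cmat2 and x y z :: complex
  assumes kappa: "a \<in> {-2..2}" "b \<in> {-2..2}" "c \<in> {-2..2}" "d \<in> {-2..2}"
    and rho: "(A, B, C, D) \<in> H_kappa a b c d"
    and xyz: "x = trace (A ** B)" "y = trace (B ** C)" "z = trace (C ** A)"
  shows "(is_G_rep Pin2 A B C D \<and> \<not> is_G_rep Spin2 A B C D \<longrightarrow>
            ((a = 0 \<and> b = 0 \<and> c = 0 \<and> d = 0) \<or>
             ((a = 0 \<and> b = 0 \<and> y = 0 \<and> z = 0) \<or> (c = 0 \<and> d = 0 \<and> y = 0 \<and> z = 0) \<or>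
              (a = 0 \<and> c = 0 \<and> x = 0 \<and> y = 0) \<or> (b = 0 \<and> d = 0 \<and> x = 0 \<and> y = 0) \<or>
              (a = 0 \<and> d = 0 \<and> x = 0 \<and> z = 0) \<or> (b = 0 \<and> c = 0 \<and> x = 0 \<and> z = 0))))
       \<and> (((a = 0 \<and> b = 0 \<and> c = 0 \<and> d = 0) \<or>
             ((a = 0 \<and> b = 0 \<and> y = 0 \<and> z = 0) \<or> (c = 0 \<and> d = 0 \<and> y = 0 \<and> z = 0) \<or>
              (a = 0 \<and> c = 0 \<and> x = 0 \<and> y = 0) \<or> (b = 0 \<and> d = 0 \<and> x = 0 \<and> y = 0) \<or>
              (a = 0 \<and> d = 0 \<and> x = 0 \<and> z = 0) \<or> (b = 0 \<and> c = 0 \<and> x = 0 \<and> z = 0)))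
          \<longrightarrow> is_G_rep Pin2 A B C D)"
proof -
  from rho have su: "A \<in> SU2" "B \<in> SU2" "C \<in> SU2" "D \<in> SU2"
    and prod: "A ** B ** C ** D = mat 1"
    and tr: "trace A = complex_of_real a" "trace B = complex_of_real b"
      "trace C = complex_of_real c" "trace D = complex_of_real d"
    unfolding H_kappa_def by auto
  show ?thesis
  proof (intro conjI impI)
    assume asm: "is_G_rep Pin2 A B C D \<and> \<not> is_G_rep Spin2 A B C D"
    then obtain g where g: "g \<in> SU2" and hall: "\<forall>h\<in>rep_image A B C D. g ** h ** ctrans g \<in> Pin2"
      unfolding is_G_rep_def by blast
    define cA where "cA = g ** A ** ctrans g"
    define cB where "cB = g ** B ** ctrans g"
    define cC where "cC = g ** C ** ctrans g"
    define cD where "cD = g ** D ** ctrans g"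
    have P: "cA \<in> Pin2" "cB \<in> Pin2" "cC \<in> Pin2" "cD \<in> Pin2"
      unfolding cA_def cB_def cC_def cD_def using hall gens_in by blast+
    have p1: "cA ** cB ** cC ** cD = mat 1" unfolding cA_def cB_def cC_def cD_def
      using conj_prod[OF g prod] .
    have nsp: "\<not> (cA \<in> Spin2 \<and> cB \<in> Spin2 \<and> cC \<in> Spin2 \<and> cD \<in> Spin2)"
    proof
      assume "cA \<in> Spin2 \<and> cB \<in> Spin2 \<and> cC \<in> Spin2 \<and> cD \<in> Spin2"
      then have "\<forall>h\<in>rep_image A B C D. g ** h ** ctrans g \<in> Spin2"
        using conj_closed[OF g, of Spin2 A B C D] Spin2_closed
        unfolding cA_def cB_def cC_def cD_def by blast
      then show False using asm g unfolding is_G_rep_def by blast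
    qed
    have ta: "cA \<in> SM \<Longrightarrow> a = 0" using trace_SM[of cA] tr(1) trace_conj[OF g] unfolding cA_def by simp
    have tb: "cB \<in> SM \<Longrightarrow> b = 0" using trace_SM[of cB] tr(2) trace_conj[OF g] unfolding cB_def by simp
    have tc: "cC \<in> SM \<Longrightarrow> c = 0" using trace_SM[of cC] tr(3) trace_conj[OF g] unfolding cC_def by simp
    have td: "cD \<in> SM \<Longrightarrow> d = 0" using trace_SM[of cD] tr(4) trace_conj[OF g] unfolding cD_def by simp
    have tx: "cA ** cB \<in> SM \<Longrightarrow> x = 0" using trace_SM[of "cA ** cB"] xyz(1) trace_conj[OF g]
      unfolding cA_def cB_def conj_mult[OF g, symmetric] by simp
    have ty: "cB ** cC \<in> SM \<Longrightarrow> y = 0" using trace_SM[of "cB ** cC"] xyz(2) trace_conj[OF g]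
      unfolding cB_def cC_def conj_mult[OF g, symmetric] by simp
    have tz: "cC ** cA \<in> SM \<Longrightarrow> z = 0" using trace_SM[of "cC ** cA"] xyz(3) trace_conj[OF g]
      unfolding cA_def cC_def conj_mult[OF g, symmetric] by simp
    show "(a = 0 \<and> b = 0 \<and> c = 0 \<and> d = 0) \<or>
             ((a = 0 \<and> b = 0 \<and> y = 0 \<and> z = 0) \<or> (c = 0 \<and> d = 0 \<and> y = 0 \<and> z = 0) \<or>
              (a = 0 \<and> c = 0 \<and> x = 0 \<and> y = 0) \<or> (b = 0 \<and> d = 0 \<and> x = 0 \<and> y = 0) \<or>
              (a = 0 \<and> d = 0 \<and> x = 0 \<and> z = 0) \<or> (b = 0 \<and> c = 0 \<and> x = 0 \<and> z = 0))"
      using fwd_core[OF P p1 nsp]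
      apply -
      apply (elim disjE conjE)
      apply (blast intro: ta tb tc td tx ty tz SM_SP SP_SM)+
      done
  next
    assume H: "(a = 0 \<and> b = 0 \<and> c = 0 \<and> d = 0) \<or>
             ((a = 0 \<and> b = 0 \<and> y = 0 \<and> z = 0) \<or> (c = 0 \<and> d = 0 \<and> y = 0 \<and> z = 0) \<or>
              (a = 0 \<and> c = 0 \<and> x = 0 \<and> y = 0) \<or> (b = 0 \<and> d = 0 \<and> x = 0 \<and> y = 0) \<or>
              (a = 0 \<and> d = 0 \<and> x = 0 \<and> z = 0) \<or> (b = 0 \<and> c = 0 \<and> x = 0 \<and> z = 0))"
    obtain a0 a1 a2 a3 where A: "A = Q a0 a1 a2 a3" using su(1) unfolding SU2_Q by blast
    obtain b0 b1 b2 b3 where B: "B = Q b0 b1 b2 b3" using su(2) unfolding SU2_Q by blast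
    obtain c0 c1 c2 c3 where C: "C = Q c0 c1 c2 c3" using su(3) unfolding SU2_Q by blast
    obtain d0 d1 d2 d3 where D: "D = Q d0 d1 d2 d3" using su(4) unfolding SU2_Q by blast
    have a: "a = 2*a0" using tr(1) unfolding A trace_Q by (metis of_real_eq_iff)
    have b: "b = 2*b0" using tr(2) unfolding B trace_Q by (metis of_real_eq_iff)
    have c: "c = 2*c0" using tr(3) unfolding C trace_Q by (metis of_real_eq_iff)
    have d: "d = 2*d0" using tr(4) unfolding D trace_Q by (metis of_real_eq_iff)
    have x: "x = complex_of_real (2*(a0*b0 - a1*b1 - a2*b2 - a3*b3))"
      unfolding xyz A B Q_mult trace_Q ..
    have y: "y = complex_of_real (2*(b0*c0 - b1*c1 - b2*c2 - b3*c3))"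
      unfolding xyz B C Q_mult trace_Q ..
    have z: "z = complex_of_real (2*(c0*a0 - c1*a1 - c2*a2 - c3*a3))"
      unfolding xyz A C Q_mult trace_Q ..
    have "(B ** C) ** (D ** A) = mat 1" using cyc[OF prod] by (simp add: matrix_mul_assoc)
    then have "D ** A = ctrans (B ** C)" using inv_eq SU2_mult su by blast
    then have "trace (D ** A) = y" using trace_ctrans_SU2 SU2_mult su xyz by metis
    then have da: "d0*a0 - d1*a1 - d2*a2 - d3*a3 = b0*c0 - b1*c1 - b2*c2 - b3*c3"
      unfolding y A D Q_mult trace_Q of_real_eq_iff by simp
    have "(A ** B) ** (C ** D) = mat 1" using prod by (simp add: matrix_mul_assoc)
    then have "C ** D = ctrans (A ** B)" using inv_eq SU2_mult su by blast
    then have "trace (C ** D) = x" using trace_ctrans_SU2 SU2_mult su xyz by metis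
    then have cd: "c0*d0 - c1*d1 - c2*d2 - c3*d3 = a0*b0 - a1*b1 - a2*b2 - a3*b3"
      unfolding x C D Q_mult trace_Q of_real_eq_iff by simp
    have "D = ctrans (A ** B ** C)" using inv_eq[OF prod] SU2_mult su by blast
    then have "trace D = trace (A ** B ** C)" using trace_ctrans_SU2 SU2_mult su by metis
    then have dd: "d0 = (a0*b0 - a1*b1 - a2*b2 - a3*b3) * c0 - (a0*b1 + a1*b0 + a2*b3 - a3*b2) * c1 -
        (a0*b2 - a1*b3 + a2*b0 + a3*b1) * c2 - (a0*b3 + a1*b2 - a2*b1 + a3*b0) * c3"
      unfolding A B C D Q_mult trace_Q of_real_eq_iff by simp
    have x0: "x = 0 \<longleftrightarrow> a0*b0 - a1*b1 - a2*b2 - a3*b3 = 0" unfolding x of_real_eq_0_iff mult_eq_0_iff by simp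
    have y0: "y = 0 \<longleftrightarrow> b0*c0 - b1*c1 - b2*c2 - b3*c3 = 0" unfolding y of_real_eq_0_iff mult_eq_0_iff by simp
    have z0: "z = 0 \<longleftrightarrow> c0*a0 - c1*a1 - c2*a2 - c3*a3 = 0" unfolding z of_real_eq_0_iff mult_eq_0_iff by simp
    note pft = pin_from_three[OF su prod]
    from H show "is_G_rep Pin2 A B C D"
    proof (elim disjE conjE)
      assume "a = 0" "b = 0" "c = 0" "d = 0"
      then have e: "a0 = 0" "b0 = 0" "c0 = 0" "d0 = 0" using a b c d by simp_all
      have det: "a1*(b2*c3-b3*c2) + a2*(b3*c1-b1*c3) + a3*(b1*c2-b2*c1) = 0"
        using dd e by (simp add: algebra_simps)
      obtain g where "g \<in> SU2" "g ** A ** ctrans g \<in> Pin2" "g ** B ** ctrans g \<in> Pin2"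
        "g ** C ** ctrans g \<in> Pin2"
        using triple_pin[of a1 a2 a3 b1 b2 b3 c0 c1 c2 c3] su det e unfolding A B C by auto
      then show ?thesis using pft by blast
    next
      assume "a = 0" "b = 0" "y = 0" "z = 0"
      then have e: "a0 = 0" "b0 = 0" "a1*c1+a2*c2+a3*c3 = 0" "b1*c1+b2*c2+b3*c3 = 0"
        using a b y0 z0 by (simp_all add: algebra_simps)
      obtain g where "g \<in> SU2" "g ** A ** ctrans g \<in> Pin2" "g ** B ** ctrans g \<in> Pin2"
        "g ** C ** ctrans g \<in> Pin2"
        using triple_pin[of a1 a2 a3 b1 b2 b3 c0 c1 c2 c3] su e unfolding A B C by auto
      then show ?thesis using pft by blast
    next
      assume "c = 0" "d = 0" "y = 0" "z = 0"
      then have e: "c0 = 0" "d0 = 0" "c1*a1+c2*a2+c3*a3 = 0" "d1*a1+d2*a2+d3*a3 = 0"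
        using c d y0 z0 da by (simp_all add: algebra_simps)
      obtain g where "g \<in> SU2" "g ** C ** ctrans g \<in> Pin2" "g ** D ** ctrans g \<in> Pin2"
        "g ** A ** ctrans g \<in> Pin2"
        using triple_pin[of c1 c2 c3 d1 d2 d3 a0 a1 a2 a3] su e unfolding A C D by auto
      then show ?thesis using pft by blast
    next
      assume "a = 0" "c = 0" "x = 0" "y = 0"
      then have e: "a0 = 0" "c0 = 0" "a1*b1+a2*b2+a3*b3 = 0" "c1*b1+c2*b2+c3*b3 = 0"
        using a c x0 y0 by (simp_all add: algebra_simps)
      obtain g where "g \<in> SU2" "g ** A ** ctrans g \<in> Pin2" "g ** C ** ctrans g \<in> Pin2"
        "g ** B ** ctrans g \<in> Pin2"
        using triple_pin[of a1 a2 a3 c1 c2 c3 b0 b1 b2 b3] su e unfolding A B C by auto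
      then show ?thesis using pft by blast
    next
      assume "b = 0" "d = 0" "x = 0" "y = 0"
      then have e: "b0 = 0" "d0 = 0" "b1*c1+b2*c2+b3*c3 = 0" "d1*c1+d2*c2+d3*c3 = 0"
        using b d x0 y0 cd by (simp_all add: algebra_simps)
      obtain g where "g \<in> SU2" "g ** B ** ctrans g \<in> Pin2" "g ** D ** ctrans g \<in> Pin2"
        "g ** C ** ctrans g \<in> Pin2"
        using triple_pin[of b1 b2 b3 d1 d2 d3 c0 c1 c2 c3] su e unfolding B C D by auto
      then show ?thesis using pft by blast
    next
      assume "a = 0" "d = 0" "x = 0" "z = 0"
      then have e: "a0 = 0" "d0 = 0" "a1*c1+a2*c2+a3*c3 = 0" "d1*c1+d2*c2+d3*c3 = 0"
        using a d x0 z0 cd by (simp_all add: algebra_simps)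
      obtain g where "g \<in> SU2" "g ** A ** ctrans g \<in> Pin2" "g ** D ** ctrans g \<in> Pin2"
        "g ** C ** ctrans g \<in> Pin2"
        using triple_pin[of a1 a2 a3 d1 d2 d3 c0 c1 c2 c3] su e unfolding A C D by auto
      then show ?thesis using pft by blast
    next
      assume "b = 0" "c = 0" "x = 0" "z = 0"
      then have e: "b0 = 0" "c0 = 0" "b1*a1+b2*a2+b3*a3 = 0" "c1*a1+c2*a2+c3*a3 = 0"
        using b c x0 z0 by (simp_all add: algebra_simps)
      obtain g where "g \<in> SU2" "g ** B ** ctrans g \<in> Pin2" "g ** C ** ctrans g \<in> Pin2"
        "g ** A ** ctrans g \<in> Pin2"
        using triple_pin[of b1 b2 b3 c1 c2 c3 a0 a1 a2 a3] su e unfolding A B C by auto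
      then show ?thesis using pft by blast
    qed
  qed
qed

end
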